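(* Let $X$ be a complex Banach space and $\Gamma\subset\mathcal{B}(X)$ such that $TS\in\Gamma$ for all $T,S\in\Gamma$. Let $\lambda:\Gamma\to\mathbb{T}$, $T\mapsto\lambda_T$, satisfy $\lambda_{TS}=\lambda_T\lambda_S$ for all $T,S\in\Gamma$, where $\mathbb{T}=\{\alpha\in\mathbb{C}:|\alpha|=1\}$. Let $\Gamma_1=\{\lambda_TT: T\in\Gamma\}$. Then $\operatorname{Rec}(\Gamma)=\operatorname{Rec}(\Gamma_1)$.
   Context: $\mathcal{B}(X)$ denotes the algebra of bounded linear operators on $X$. For $\Gamma\subset\mathcal{B}(X)$, a vector $x\in X\setminus\{0\}$ is called recurrent for $\Gamma$ if there exists a sequence $(T_k)_{k\geq 1}$ of elements of $\Gamma$ such that $T_kx\to x$ as $k\to\infty$. $\operatorname{Rec}(\Gamma)$ denotes the set of all recurrent vectors for $\Gamma$. *)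

theory Defs
  imports "HOL-Analysis.Analysis"
begin

text \<open>A complex Banach space: a real Banach space 'a together with a complex scalar
multiplication sc extending the real one, satisfying the module axioms and
norm (sc c x) = cmod c * norm x.\<close>
definition complex_scaling :: "(complex \<Rightarrow> 'a::banach \<Rightarrow> 'a) \<Rightarrow> bool" where
  "complex_scaling sc \<longleftrightarrow>
     (\<forall>a b x. sc a (sc b x) = sc (a * b) x) \<and>
     (\<forall>a x y. sc a (x + y) = sc a x + sc a y) \<and>
     (\<forall>a b x. sc (a + b) x = sc a x + sc b x) \<and>
     (\<forall>r x. sc (complex_of_real r) x = r *\<^sub>R x) \<and>
     (\<forall>a x. norm (sc a x) = cmod a * norm x)"

definition bounded_ops :: "(complex \<Rightarrow> 'a::banach \<Rightarrow> 'a) \<Rightarrow> ('a \<Rightarrow> 'a) set" where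
  "bounded_ops sc = {T. bounded_linear T \<and> (\<forall>c x. T (sc c x) = sc c (T x))}"

definition Rec :: "('a::real_normed_vector \<Rightarrow> 'a) set \<Rightarrow> 'a set" where
  "Rec \<Gamma> = {x. x \<noteq> 0 \<and> (\<exists>T :: nat \<Rightarrow> 'a \<Rightarrow> 'a. (\<forall>k. T k \<in> \<Gamma>) \<and> (\<lambda>k. T k x) \<longlonglongrightarrow> x)}"

end

theory Submission
  imports Defs
begin

definition Qp :: "(complex \<Rightarrow> 'a::banach \<Rightarrow> 'a) \<Rightarrow> ('a \<Rightarrow> 'a) set \<Rightarrow> (('a \<Rightarrow> 'a) \<Rightarrow> complex) \<Rightarrow> 'a \<Rightarrow> complex \<Rightarrow> complex \<Rightarrow> bool" where
  "Qp sc G lam x a b \<longleftrightarrow> cmod a = 1 \<and> cmod b = 1 \<and>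
     (\<forall>e>0. \<exists>S\<in>G. cmod (lam S - a) < e \<and> norm (S x - sc b x) < e)"

lemma norm_split: "u = v + w \<Longrightarrow> norm u \<le> norm v + norm w"
  by (simp add: norm_triangle_ineq)

lemma unit_cnj: "cmod (c::complex) = 1 \<Longrightarrow> c * cnj c = 1"
  by (simp add: complex_norm_square[symmetric])

lemma ev2:
  assumes "eventually P sequentially" "eventually Q sequentially"
  shows "\<exists>k. P k \<and> Q k"
proof -
  obtain N where "\<forall>n\<ge>N. P n \<and> Q n" using eventually_conj[OF assms] unfolding eventually_sequentially by blast
  thus ?thesis by blast
qed

locale recsetup =
  fixes sc :: "complex \<Rightarrow> 'a::banach \<Rightarrow> 'a"
    and G :: "('a \<Rightarrow> 'a) set"
    and lam :: "('a \<Rightarrow> 'a) \<Rightarrow> complex"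
  assumes cs: "complex_scaling sc"
    and Gb: "G \<subseteq> bounded_ops sc"
    and Gc: "\<forall>T\<in>G. \<forall>S\<in>G. T \<circ> S \<in> G"
    and l1: "\<forall>T\<in>G. cmod (lam T) = 1"
    and lm: "\<forall>T\<in>G. \<forall>S\<in>G. lam (T \<circ> S) = lam T * lam S"
begin

lemma sc_mult: "sc a (sc b x) = sc (a * b) x" using cs unfolding complex_scaling_def by blast
lemma sc_addr: "sc a (x + y) = sc a x + sc a y" using cs unfolding complex_scaling_def by blast
lemma sc_addl: "sc (a + b) x = sc a x + sc b x" using cs unfolding complex_scaling_def by blast
lemma sc_real: "sc (complex_of_real r) x = r *\<^sub>R x" using cs unfolding complex_scaling_def by blast
lemma sc_norm: "norm (sc a x) = cmod a * norm x" using cs unfolding complex_scaling_def by blast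
lemma sc_one: "sc 1 x = x" using sc_real[of 1 x] by simp
lemma sc_diffr: "sc a y - sc a z = sc a (y - z)"
  using sc_addr[of a "y - z" z] by simp
lemma sc_diffl: "sc a z - sc b z = sc (a - b) z"
  using sc_addl[of "a - b" b z] by simp

lemma Gops: "S \<in> G \<Longrightarrow> bounded_linear S \<and> (\<forall>c y. S (sc c y) = sc c (S y))"
  using Gb unfolding bounded_ops_def by blast

lemma Q_mult:
  assumes "Qp sc G lam x a b" "Qp sc G lam x a' b'"
  shows "Qp sc G lam x (a * a') (b * b')"
  unfolding Qp_def
proof (intro conjI allI impI)
  show "cmod (a * a') = 1" "cmod (b * b') = 1" using assms unfolding Qp_def by (simp_all add: norm_mult)
  fix e :: real assume e: "e > 0"
  obtain S where S: "S \<in> G" "cmod (lam S - a) < e/2" "norm (S x - sc b x) < e/2"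
    using assms(1) e unfolding Qp_def by (meson half_gt_zero)
  have bl: "bounded_linear S" and comm: "\<And>c y. S (sc c y) = sc c (S y)" using Gops[OF S(1)] by auto
  obtain K where K: "K > 0" "\<And>y. norm (S y) \<le> norm y * K" using bounded_linear.pos_bounded[OF bl] by blast
  have eK: "e / 2 / K > 0" using e K by simp
  have m: "min (e/2) (e/2/K) > 0" using e eK by simp
  obtain R where R0: "R \<in> G" "cmod (lam R - a') < min (e/2) (e/2/K)" "norm (R x - sc b' x) < min (e/2) (e/2/K)"
    using assms(2) m unfolding Qp_def by blast
  hence R: "R \<in> G" "cmod (lam R - a') < e/2" "norm (R x - sc b' x) < e/2/K" by auto
  have a': "cmod a' = 1" and b': "cmod b' = 1" using assms(2) unfolding Qp_def by auto
  have lS: "cmod (lam S) = 1" using l1 S(1) by blast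
  have SR: "S \<circ> R \<in> G" using Gc S(1) R(1) by blast
  have "lam (S \<circ> R) - a * a' = lam S * (lam R - a') + (lam S - a) * a'"
    using lm S(1) R(1) by (simp add: algebra_simps)
  hence "cmod (lam (S \<circ> R) - a * a') \<le> cmod (lam S * (lam R - a')) + cmod ((lam S - a) * a')"
    by (rule norm_split)
  hence "cmod (lam (S \<circ> R) - a * a') \<le> cmod (lam R - a') + cmod (lam S - a)"
    using lS a' by (simp add: norm_mult)
  hence c1: "cmod (lam (S \<circ> R) - a * a') < e" using S R by linarith
  have "(S \<circ> R) x - sc (b * b') x = S (R x - sc b' x) + (sc b' (S x) - sc b' (sc b x))"
    using comm[of b' x] linear_diff[OF bounded_linear.linear[OF bl]] sc_mult[of b' b x]
    by (simp add: mult.commute)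
  also have "\<dots> = S (R x - sc b' x) + sc b' (S x - sc b x)" by (simp add: sc_diffr)
  finally have "norm ((S \<circ> R) x - sc (b * b') x) \<le> norm (S (R x - sc b' x)) + norm (sc b' (S x - sc b x))"
    by (rule norm_split)
  also have "\<dots> \<le> norm (R x - sc b' x) * K + norm (S x - sc b x)"
    using K(2) b' by (simp add: sc_norm)
  also have "\<dots> < e/2/K * K + e/2"
    using R(3) S(3) K(1) by (intro add_less_le_mono mult_strict_right_mono) auto
  also have "\<dots> = e" using K by simp
  finally show "\<exists>S\<in>G. cmod (lam S - a * a') < e \<and> norm (S x - sc (b * b') x) < e"
    using c1 SR by blast
qed

lemma Q_pow:
  assumes "Qp sc G lam x a b"
  shows "Qp sc G lam x (a ^ Suc n) (b ^ Suc n)"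
proof (induction n)
  case 0 then show ?case using assms by simp
next
  case (Suc n) then show ?case using Q_mult[OF assms Suc] by simp
qed

lemma Q_closed:
  assumes "cmod a = 1" "cmod b = 1"
    and "\<And>d. d > 0 \<Longrightarrow> \<exists>a' b'. Qp sc G lam x a' b' \<and> cmod (a' - a) < d \<and> cmod (b' - b) < d"
  shows "Qp sc G lam x a b"
  unfolding Qp_def
proof (intro conjI allI impI assms(1,2))
  fix e :: real assume e: "e > 0"
  define d where "d = e / 2 / (norm x + 1)"
  have nx: "norm x + 1 > 0" using norm_ge_zero[of x] by linarith
  have d0: "d > 0" using e nx unfolding d_def by (intro divide_pos_pos) auto
  have "\<forall>t::real. t > 0 \<longrightarrow> e / 2 / t * t = e / 2" by simp
  hence dd: "d * (norm x + 1) = e / 2" unfolding d_def using nx by blast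
  hence dn: "d * norm x + d = e/2" by (simp add: algebra_simps)
  have d: "d > 0" "d \<le> e/2" using d0 dn by (auto intro: add_nonneg_pos mult_nonneg_nonneg)
  obtain a' b' where ab: "Qp sc G lam x a' b'" "cmod (a' - a) < d" "cmod (b' - b) < d"
    using assms(3)[OF d(1)] by blast
  obtain S where S: "S \<in> G" "cmod (lam S - a') < e/2" "norm (S x - sc b' x) < e/2"
    using ab(1) e unfolding Qp_def by (meson half_gt_zero)
  have "cmod (lam S - a) \<le> cmod (lam S - a') + cmod (a' - a)"
    by (rule norm_split) simp
  hence c1: "cmod (lam S - a) < e" using S ab d by linarith
  have "S x - sc b x = (S x - sc b' x) + sc (b' - b) x" by (simp add: sc_diffl[symmetric])
  hence "norm (S x - sc b x) \<le> norm (S x - sc b' x) + norm (sc (b' - b) x)"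
    by (rule norm_split)
  hence "norm (S x - sc b x) \<le> norm (S x - sc b' x) + cmod (b' - b) * norm x"
    by (simp add: sc_norm)
  also have "cmod (b' - b) * norm x \<le> d * norm x"
    using ab(3) by (intro mult_right_mono) auto
  also have "d * norm x \<le> e/2" using dn d0 by linarith
  finally have "norm (S x - sc b x) < e" using S(3) by linarith
  then show "\<exists>S\<in>G. cmod (lam S - a) < e \<and> norm (S x - sc b x) < e" using c1 S(1) by blast
qed

lemma Q_one:
  assumes "Qp sc G lam x a b"
  shows "Qp sc G lam x 1 1"
proof -
  have ab: "cmod a = 1" "cmod b = 1" using assms unfolding Qp_def by auto
  define f where "f n = (a ^ n, b ^ n)" for n
  have fin: "\<forall>n. f n \<in> sphere 0 1 \<times> sphere 0 1" using ab by (simp add: f_def norm_power)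
  have "seq_compact (sphere (0::complex) 1 \<times> sphere (0::complex) 1)"
    by (intro compact_imp_seq_compact compact_Times compact_sphere)
  then obtain L r where L: "L \<in> sphere 0 1 \<times> sphere 0 1" "strict_mono r" "(f \<circ> r) \<longlonglongrightarrow> L"
    using fin unfolding seq_compact_def by meson
  obtain L1 L2 where LL: "L = (L1, L2)" by (cases L)
  have n1: "cmod L1 = 1" "cmod L2 = 1" using L(1) LL by auto
  have t1: "(\<lambda>k. a ^ r k) \<longlonglongrightarrow> L1" using tendsto_fst[OF L(3)] LL by (simp add: f_def o_def)
  have t2: "(\<lambda>k. b ^ r k) \<longlonglongrightarrow> L2" using tendsto_snd[OF L(3)] LL by (simp add: f_def o_def)
  define m where "m k = r (Suc k) - r k" for k
  have mpos: "m k > 0" for k using L(2) unfolding m_def strict_mono_def by simp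
  have split: "r (Suc k) = m k + r k" for k using L(2) unfolding m_def strict_mono_def
    by (simp add: less_imp_le)
  have pw: "cmod c = 1 \<Longrightarrow> c ^ r (Suc k) * cnj (c ^ r k) = c ^ m k" for c :: complex and k
  proof -
    assume c: "cmod c = 1"
    have "c ^ r k * cnj (c ^ r k) = 1" using c
      by (intro unit_cnj) (simp add: norm_power)
    then show ?thesis by (simp add: split power_add)
  qed
  have "(\<lambda>k. a ^ r (Suc k) * cnj (a ^ r k)) \<longlonglongrightarrow> L1 * cnj L1"
    by (intro tendsto_mult tendsto_cnj LIMSEQ_Suc[OF t1, simplified] t1)
  moreover have "L1 * cnj L1 = 1" using n1 by (simp add: unit_cnj)
  ultimately have ma: "(\<lambda>k. a ^ m k) \<longlonglongrightarrow> 1" using pw[OF ab(1)] by simp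
  have "(\<lambda>k. b ^ r (Suc k) * cnj (b ^ r k)) \<longlonglongrightarrow> L2 * cnj L2"
    by (intro tendsto_mult tendsto_cnj LIMSEQ_Suc[OF t2, simplified] t2)
  moreover have "L2 * cnj L2 = 1" using n1 by (simp add: unit_cnj)
  ultimately have mb: "(\<lambda>k. b ^ m k) \<longlonglongrightarrow> 1" using pw[OF ab(2)] by simp
  show ?thesis
  proof (rule Q_closed)
    fix d :: real assume d: "d > 0"
    have "\<forall>\<^sub>F k in sequentially. dist (a ^ m k) 1 < d" using ma d by (rule tendstoD)
    moreover have "\<forall>\<^sub>F k in sequentially. dist (b ^ m k) 1 < d" using mb d by (rule tendstoD)
    ultimately obtain k where k: "dist (a ^ m k) 1 < d" "dist (b ^ m k) 1 < d"
      using ev2 by blast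
    have "Qp sc G lam x (a ^ Suc (m k - 1)) (b ^ Suc (m k - 1))" by (rule Q_pow[OF assms])
    hence "Qp sc G lam x (a ^ m k) (b ^ m k)" using mpos[of k] by simp
    then show "\<exists>a' b'. Qp sc G lam x a' b' \<and> cmod (a' - 1) < d \<and> cmod (b' - 1) < d"
      using k by (auto simp: dist_norm)
  qed auto
qed

lemma rec_Q:
  assumes "x \<in> Rec G"
  shows "\<exists>a. Qp sc G lam x a 1"
proof -
  obtain T where T: "\<forall>k. T k \<in> G" "(\<lambda>k. T k x) \<longlonglongrightarrow> x" using assms unfolding Rec_def by blast
  have "\<forall>k. lam (T k) \<in> sphere 0 1" using T(1) l1 by simp
  moreover have "seq_compact (sphere (0::complex) 1)" by (intro compact_imp_seq_compact compact_sphere)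
  ultimately obtain \<mu> r where mu: "\<mu> \<in> sphere 0 1" "strict_mono r" "((\<lambda>k. lam (T k)) \<circ> r) \<longlonglongrightarrow> \<mu>"
    unfolding seq_compact_def by meson
  have tx: "((\<lambda>k. T k x) \<circ> r) \<longlonglongrightarrow> x" by (rule LIMSEQ_subseq_LIMSEQ[OF T(2) mu(2)])
  have "Qp sc G lam x \<mu> 1" unfolding Qp_def
  proof (intro conjI allI impI)
    show "cmod \<mu> = 1" using mu(1) by simp
    show "cmod (1::complex) = 1" by simp
    fix e :: real assume e: "e > 0"
    have "\<forall>\<^sub>F k in sequentially. dist (((\<lambda>k. lam (T k)) \<circ> r) k) \<mu> < e" using mu(3) e by (rule tendstoD)
    moreover have "\<forall>\<^sub>F k in sequentially. dist (((\<lambda>k. T k x) \<circ> r) k) x < e" using tx e by (rule tendstoD)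
    ultimately obtain k where k: "dist (((\<lambda>k. lam (T k)) \<circ> r) k) \<mu> < e" "dist (((\<lambda>k. T k x) \<circ> r) k) x < e"
      using ev2 by blast
    then show "\<exists>S\<in>G. cmod (lam S - \<mu>) < e \<and> norm (S x - sc 1 x) < e"
      using T(1) by (intro bexI[of _ "T (r k)"]) (auto simp: dist_norm sc_one)
  qed
  then show ?thesis by blast
qed

lemma rec1_Q:
  assumes "x \<in> Rec ((\<lambda>T. (\<lambda>x. sc (lam T) (T x))) ` G)"
  shows "\<exists>a. Qp sc G lam x a (cnj a)"
proof -
  obtain T where T: "\<forall>k. T k \<in> (\<lambda>T. (\<lambda>x. sc (lam T) (T x))) ` G" "(\<lambda>k. T k x) \<longlonglongrightarrow> x"
    using assms unfolding Rec_def by blast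
  have "\<forall>k. \<exists>S. S \<in> G \<and> T k = (\<lambda>x. sc (lam S) (S x))" using T(1) by blast
  then obtain S where S: "\<And>k. S k \<in> G" "\<And>k. T k = (\<lambda>x. sc (lam (S k)) (S k x))" by metis
  have "\<forall>k. lam (S k) \<in> sphere 0 1" using S(1) l1 by simp
  moreover have "seq_compact (sphere (0::complex) 1)" by (intro compact_imp_seq_compact compact_sphere)
  ultimately obtain \<mu> r where mu: "\<mu> \<in> sphere 0 1" "strict_mono r" "((\<lambda>k. lam (S k)) \<circ> r) \<longlonglongrightarrow> \<mu>"
    unfolding seq_compact_def by meson
  have tx: "((\<lambda>k. T k x) \<circ> r) \<longlonglongrightarrow> x" by (rule LIMSEQ_subseq_LIMSEQ[OF T(2) mu(2)])
  have "Qp sc G lam x \<mu> (cnj \<mu>)" unfolding Qp_def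
  proof (intro conjI allI impI)
    show "cmod \<mu> = 1" using mu(1) by simp
    then show "cmod (cnj \<mu>) = 1" by simp
    fix e :: real assume e: "e > 0"
    define d where "d = e / (norm x + 2)"
    have nx: "norm x + 2 > 0" using norm_ge_zero[of x] by linarith
    have d0: "d > 0" using e nx unfolding d_def by (intro divide_pos_pos) auto
    have "\<forall>t::real. t > 0 \<longrightarrow> e / t * t = e" by simp
    hence dd: "d * (norm x + 2) = e" unfolding d_def using nx by blast
    have "d * norm x \<ge> 0" using d0 by simp
    moreover have "d * (norm x + 2) = d * norm x + 2 * d" by (simp add: algebra_simps)
    ultimately have de: "d < e" using dd d0 by linarith
    have "\<forall>\<^sub>F k in sequentially. dist (((\<lambda>k. lam (S k)) \<circ> r) k) \<mu> < d" using mu(3) d0 by (rule tendstoD)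
    moreover have "\<forall>\<^sub>F k in sequentially. dist (((\<lambda>k. T k x) \<circ> r) k) x < d" using tx d0 by (rule tendstoD)
    ultimately obtain k where k: "dist (((\<lambda>k. lam (S k)) \<circ> r) k) \<mu> < d" "dist (((\<lambda>k. T k x) \<circ> r) k) x < d"
      using ev2 by blast
    define R where "R = S (r k)"
    define l where "l = lam R"
    define y where "y = sc l (R x)"
    have R: "R \<in> G" unfolding R_def using S(1) by simp
    have l: "cmod l = 1" unfolding l_def using R l1 by simp
    have k1: "cmod (l - \<mu>) < d" using k(1) by (simp add: l_def R_def dist_norm)
    have k2: "norm (y - x) < d" using k(2) by (simp add: y_def l_def R_def S(2) dist_norm)
    have "cnj l * l = 1" using unit_cnj[OF l] by (simp add: mult.commute)
    hence Rx: "R x = sc (cnj l) y" unfolding y_def by (simp add: sc_mult sc_one)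
    have "R x - sc (cnj \<mu>) x = (sc (cnj l) y - sc (cnj l) x) + (sc (cnj l) x - sc (cnj \<mu>) x)"
      by (simp add: Rx)
    also have "\<dots> = sc (cnj l) (y - x) + sc (cnj l - cnj \<mu>) x" by (simp add: sc_diffr sc_diffl)
    finally have "R x - sc (cnj \<mu>) x = sc (cnj l) (y - x) + sc (cnj l - cnj \<mu>) x" .
    hence "norm (R x - sc (cnj \<mu>) x) \<le> norm (sc (cnj l) (y - x)) + norm (sc (cnj l - cnj \<mu>) x)"
      by (rule norm_split)
    hence "norm (R x - sc (cnj \<mu>) x) \<le> norm (y - x) + cmod (l - \<mu>) * norm x"
      using l by (simp add: sc_norm complex_cnj_diff[symmetric] del: complex_cnj_diff)
    also have "cmod (l - \<mu>) * norm x \<le> d * norm x" using k1 by (intro mult_right_mono) auto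
    finally have "norm (R x - sc (cnj \<mu>) x) < d + d * norm x" using k2 by linarith
    also have "\<dots> \<le> e" using dd d0 by (simp add: algebra_simps)
    finally show "\<exists>S\<in>G. cmod (lam S - \<mu>) < e \<and> norm (S x - sc (cnj \<mu>) x) < e"
      using R k1 de l_def by (intro bexI[of _ R]) auto
  qed
  then show ?thesis by blast
qed

lemma Q_rec:
  assumes "Qp sc G lam x 1 1" "x \<noteq> 0"
  shows "x \<in> Rec G" "x \<in> Rec ((\<lambda>T. (\<lambda>x. sc (lam T) (T x))) ` G)"
proof -
  have "\<forall>n. \<exists>S\<in>G. cmod (lam S - 1) < inverse (real (Suc n)) \<and> norm (S x - x) < inverse (real (Suc n))"
    using assms(1) unfolding Qp_def by (simp add: sc_one)
  then obtain S where S: "\<And>n. S n \<in> G" "\<And>n. cmod (lam (S n) - 1) < inverse (real (Suc n))"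
    "\<And>n. norm (S n x - x) < inverse (real (Suc n))" by metis
  have inv: "(\<lambda>n. inverse (real (Suc n))) \<longlonglongrightarrow> 0" by (rule LIMSEQ_inverse_real_of_nat)
  have "\<forall>n. norm (S n x - x) \<le> inverse (real (Suc n))" using S(3) less_imp_le by blast
  hence "(\<lambda>n. S n x - x) \<longlonglongrightarrow> 0"
    by (intro Lim_null_comparison[OF _ inv] always_eventually)
  hence "(\<lambda>n. S n x) \<longlonglongrightarrow> x" by (subst Lim_null) 
  then show "x \<in> Rec G" unfolding Rec_def using S(1) assms(2) by blast
  have b: "norm (sc (lam (S n)) (S n x) - x) \<le> inverse (real (Suc n)) * (norm x + 2)" for n
  proof -
    have i1: "inverse (real (Suc n)) \<le> 1" by (simp add: inverse_le_1_iff)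
    have nS: "norm (S n x) \<le> norm x + 1" using S(3)[of n] i1 norm_triangle_ineq2[of "S n x" x] by linarith
    have "sc (lam (S n)) (S n x) - x = sc (lam (S n) - 1) (S n x) + (S n x - x)"
      by (simp add: sc_diffl[symmetric] sc_one)
    hence "norm (sc (lam (S n)) (S n x) - x) \<le> norm (sc (lam (S n) - 1) (S n x)) + norm (S n x - x)"
      by (rule norm_split)
    hence "norm (sc (lam (S n)) (S n x) - x) \<le> cmod (lam (S n) - 1) * norm (S n x) + norm (S n x - x)"
      by (simp add: sc_norm)
    also have "\<dots> \<le> inverse (real (Suc n)) * (norm x + 1) + inverse (real (Suc n))"
      using S(2,3)[of n] nS by (intro add_mono mult_mono) auto
    finally show ?thesis by (simp add: algebra_simps)
  qed
  have "(\<lambda>n. sc (lam (S n)) (S n x) - x) \<longlonglongrightarrow> 0"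
    by (intro Lim_null_comparison[OF _ tendsto_mult_left_zero[OF inv, of "norm x + 2"]] always_eventually allI b)
  hence "(\<lambda>n. (\<lambda>y. sc (lam (S n)) (S n y)) x) \<longlonglongrightarrow> x" by (subst Lim_null) simp
  moreover have "\<forall>n. (\<lambda>y. sc (lam (S n)) (S n y)) \<in> (\<lambda>T. (\<lambda>x. sc (lam T) (T x))) ` G" using S(1) by blast
  ultimately show "x \<in> Rec ((\<lambda>T. (\<lambda>x. sc (lam T) (T x))) ` G)" unfolding Rec_def using assms(2)
    by (intro CollectI conjI exI[of _ "\<lambda>n. (\<lambda>y. sc (lam (S n)) (S n y))"]) auto
qed

end

theorem theorem2p7:
  fixes sc :: "complex \<Rightarrow> 'a::banach \<Rightarrow> 'a"
    and \<Gamma> :: "('a \<Rightarrow> 'a) set"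
    and lam :: "('a \<Rightarrow> 'a) \<Rightarrow> complex"
  assumes "complex_scaling sc"
    and "\<Gamma> \<subseteq> bounded_ops sc"
    and "\<forall>T\<in>\<Gamma>. \<forall>S\<in>\<Gamma>. T \<circ> S \<in> \<Gamma>"
    and "\<forall>T\<in>\<Gamma>. cmod (lam T) = 1"
    and "\<forall>T\<in>\<Gamma>. \<forall>S\<in>\<Gamma>. lam (T \<circ> S) = lam T * lam S"
  shows "Rec \<Gamma> = Rec ((\<lambda>T. (\<lambda>x. sc (lam T) (T x))) ` \<Gamma>)"
proof -
  interpret recsetup sc \<Gamma> lam using assms by unfold_locales
  show ?thesis
  proof
    show "Rec \<Gamma> \<subseteq> Rec ((\<lambda>T. (\<lambda>x. sc (lam T) (T x))) ` \<Gamma>)"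
    proof
      fix x assume x: "x \<in> Rec \<Gamma>"
      then have "x \<noteq> 0" unfolding Rec_def by blast
      with rec_Q[OF x] Q_one Q_rec(2) show "x \<in> Rec ((\<lambda>T. (\<lambda>x. sc (lam T) (T x))) ` \<Gamma>)" by blast
    qed
    show "Rec ((\<lambda>T. (\<lambda>x. sc (lam T) (T x))) ` \<Gamma>) \<subseteq> Rec \<Gamma>"
    proof
      fix x assume x: "x \<in> Rec ((\<lambda>T. (\<lambda>x. sc (lam T) (T x))) ` \<Gamma>)"
      then have "x \<noteq> 0" unfolding Rec_def by blast
      with rec1_Q[OF x] Q_one Q_rec(1) show "x \<in> Rec \<Gamma>" by blast
    qed
  qed
qed

end
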